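(* Let $a_2,a_3$ be integers with $1<a_2<a_3$, $A=\{1,a_2,a_3\}$, and write $a_3=C_2a_2+C_1$ with $0\le C_1<a_2$. If $a_2\ge 2C_1\ge a_2-2C_2+1$, then the fundamental stride generator for $A$ is of order $0$ or $1$.
   Context: For integers $n$ and $i\ge 0$, an integer $x$ has an $n$-generation of order $i$ if there are integers $c_1,c_2\ge 0$ with $x+ia_3=c_2a_2+c_1$ and $c_1+c_2\le n+i$. For integers $n$ and $p\ge0$, $SG(A,n,p)$ is a stride generator (of order $p$) if: (A) every integer $0\le x<a_3$ has an $n$-generation of some order $\le p$; (B) at least one integer $0\le x<a_3$ has no $n$-generation of order $<p$; (C) at least one integer $0\le y<a_3$ has no $(n-1)$-generation of any order $\le p+1$. A stride generator $SG(A,n,p)$ is the fundamental stride generator for $A$ if there is no stride generator $SG(A,n',p')$ with $n'>n$. *)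

theory Defs
  imports Main
begin

definition has_gen :: "int \<Rightarrow> int \<Rightarrow> int \<Rightarrow> int \<Rightarrow> nat \<Rightarrow> bool" where
  "has_gen a2 a3 n x i \<longleftrightarrow>
     (\<exists>c1 c2 :: int. c1 \<ge> 0 \<and> c2 \<ge> 0 \<and> x + int i * a3 = c2 * a2 + c1 \<and> c1 + c2 \<le> n + int i)"

definition stride_generator :: "int \<Rightarrow> int \<Rightarrow> int \<Rightarrow> nat \<Rightarrow> bool" where
  "stride_generator a2 a3 n p \<longleftrightarrow>
     (\<forall>x. 0 \<le> x \<and> x < a3 \<longrightarrow> (\<exists>i\<le>p. has_gen a2 a3 n x i)) \<and>
     (\<exists>x. 0 \<le> x \<and> x < a3 \<and> \<not> (\<exists>i<p. has_gen a2 a3 n x i)) \<and>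
     (\<exists>y. 0 \<le> y \<and> y < a3 \<and> \<not> (\<exists>i\<le>p + 1. has_gen a2 a3 (n - 1) y i))"

definition fundamental_sg :: "int \<Rightarrow> int \<Rightarrow> int \<Rightarrow> nat \<Rightarrow> bool" where
  "fundamental_sg a2 a3 n p \<longleftrightarrow>
     stride_generator a2 a3 n p \<and> \<not> (\<exists>n' p'. n' > n \<and> stride_generator a2 a3 n' p')"

end

theory Submission
  imports Defs
begin

lemma dmul_bounds:
  fixes d a :: int
  assumes "1 < a"
  shows "d < 0 \<Longrightarrow> d * a \<le> - a" and "0 \<le> d \<Longrightarrow> d \<le> d * a"
proof -
  assume "d < 0" then have "d \<le> -1" by simp
  then have "d * a \<le> (-1) * a" using assms by (intro mult_right_mono) auto
  then show "d * a \<le> - a" by simp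
next
  assume "0 \<le> d"
  then have "d * 1 \<le> d * a" using assms by (intro mult_left_mono) auto
  then show "d \<le> d * a" by simp
qed

lemma gen_iff:
  fixes a2 a3 n x q r :: int
  assumes "1 < a2" "0 \<le> r" "r < a2" "x + int i * a3 = q*a2 + r" and q0: "0 \<le> q"
  shows "has_gen a2 a3 n x i \<longleftrightarrow> q + r \<le> n + int i"
proof
  assume "has_gen a2 a3 n x i"
  then obtain c1 c2 where c: "c1 \<ge> 0" "c2 \<ge> 0" "x + int i * a3 = c2 * a2 + c1" "c1 + c2 \<le> n + int i"
    unfolding has_gen_def by blast
  define d where "d = q - c2"
  have e: "c1 = d * a2 + r" using c(3) assms(4) unfolding d_def by (simp add: algebra_simps)
  have "\<not> d < 0"
  proof
    assume "d < 0" then have "d * a2 \<le> - a2" using dmul_bounds(1)[OF assms(1)] by blast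
    then show False using e c(1) assms(3) by linarith
  qed
  then have "d \<le> d * a2" using dmul_bounds(2)[OF assms(1)] by simp
  then show "q + r \<le> n + int i" using e c(4) d_def by linarith
next
  assume "q + r \<le> n + int i"
  then show "has_gen a2 a3 n x i"
    unfolding has_gen_def using assms q0 by (intro exI[of _ r] exI[of _ q]) (simp add: algebra_simps)
qed

lemma mono_gen:
  assumes "has_gen a2 a3 n x i" "n \<le> n'"
  shows "has_gen a2 a3 n' x i"
  using assms unfolding has_gen_def by force

theorem lemma16:
  fixes a2 a3 C1 C2 n :: int and p :: nat
  assumes "1 < a2" and "a2 < a3"
    and "a3 = C2 * a2 + C1" and "0 \<le> C1" and "C1 < a2"
    and "a2 \<ge> 2 * C1" and "2 * C1 \<ge> a2 - 2 * C2 + 1"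
    and "fundamental_sg a2 a3 n p"
  shows "p = 0 \<or> p = 1"
proof (rule ccontr)
  assume np: "\<not> (p = 0 \<or> p = 1)"
  have C2pos: "1 \<le> C2"
  proof (rule ccontr)
    assume "\<not> 1 \<le> C2"
    then have "C2 * a2 \<le> 0" using assms(1) by (intro mult_nonpos_nonneg) auto
    then show False using assms by linarith
  qed
  define K where "K = max (C2+a2-C1-2) (min (C2+a2-2) (2*C2+C1-2))"
  have Kge: "C2 + C1 - 1 \<le> K" "C2+a2-C1-2 \<le> K" "min (C2+a2-2) (2*C2+C1-2) \<le> K" unfolding K_def using assms C2pos by auto
  have Kle: "K \<le> C2 + a2 - 2" "C2 + 2*C1 \<ge> a2 \<Longrightarrow> K \<le> 2*C2+C1-2"
    unfolding K_def using assms C2pos by auto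
  have cover: "has_gen a2 a3 K x 0 \<or> has_gen a2 a3 K x 1" if x: "0 \<le> x" "x < a3" for x
  proof -
    define q where "q = x div a2"
    define r where "r = x mod a2"
    have xe: "x = q * a2 + r" unfolding q_def r_def by simp
    have r: "0 \<le> r" "r < a2" unfolding r_def using assms(1) by auto
    have q0: "0 \<le> q" unfolding q_def using x(1) assms(1) by (simp add: pos_imp_zdiv_nonneg_iff)
    have qle: "q \<le> C2"
    proof (rule ccontr)
      assume "\<not> q \<le> C2"
      then have "0 \<le> q - C2 - 1" by simp
      then have "q - C2 - 1 \<le> (q - C2 - 1) * a2" using dmul_bounds(2)[OF assms(1)] by blast
      then have "0 \<le> (q - C2 - 1) * a2" using \<open>0 \<le> q - C2 - 1\<close> by linarith
      then have "C2 * a2 + a2 \<le> q * a2" by (simp add: algebra_simps)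
      then show False using xe x assms r by linarith
    qed
    have qC: "q = C2 \<Longrightarrow> r < C1" using xe x assms by simp
    have g0: "has_gen a2 a3 K x 0 \<longleftrightarrow> q + r \<le> K + int 0"
      by (rule gen_iff[OF assms(1) r]) (use xe q0 in auto)
    show ?thesis
    proof (cases "r + C1 < a2")
      case True
      then show ?thesis using g0 qle qC Kge by (cases "q = C2") auto
    next
      case False
      have "has_gen a2 a3 K x 1 \<longleftrightarrow> (q + C2 + 1) + (r + C1 - a2) \<le> K + int 1"
        by (rule gen_iff[OF assms(1)]) (use xe q0 False r assms(3) assms(5) C2pos in \<open>auto simp: algebra_simps\<close>)
      moreover have "q \<noteq> C2" using qC False assms(6) r by linarith
      ultimately show ?thesis using g0 qle Kle Kge assms(6) r False by (auto simp: min_def split: if_splits)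
    qed
  qed
  have wit: "\<exists>y. 0 \<le> y \<and> y < a3 \<and> \<not> (\<exists>i\<le>2. has_gen a2 a3 (K - 1) y i)"
  proof (cases "C2 + 2*C1 \<ge> a2")
    case True
    define y where "y = (C2 - 1) * a2 + (a2 - 1)"
    have y0: "0 \<le> y" unfolding y_def using C2pos assms(1) by simp
    have ya: "y < a3" unfolding y_def using assms by (simp add: algebra_simps)
    have n0: "\<not> has_gen a2 a3 (K - 1) y 0"
      by (subst gen_iff[OF assms(1), where r="a2 - 1" and q="C2 - 1"]) (use y_def Kle C2pos assms in auto)
    have n1: "\<not> has_gen a2 a3 (K - 1) y 1"
    proof (cases "C1 = 0")
      case True
      show ?thesis
        by (subst gen_iff[OF assms(1), where r="a2 - 1" and q="2*C2 - 1"]) (use y_def Kle C2pos True assms in \<open>auto simp: algebra_simps\<close>)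
    next
      case False
      show ?thesis
        by (subst gen_iff[OF assms(1), where r="C1 - 1" and q="2*C2"]) (use y_def Kle True C2pos False assms in \<open>auto simp: algebra_simps\<close>)
    qed
    have n2: "\<not> has_gen a2 a3 (K - 1) y 2"
    proof (cases "C1 = 0")
      case True
      show ?thesis
        by (subst gen_iff[OF assms(1), where r="a2 - 1" and q="3*C2 - 1"]) (use y_def Kle C2pos True assms in \<open>auto simp: algebra_simps\<close>)
    next
      case False
      show ?thesis
        by (subst gen_iff[OF assms(1), where r="2*C1 - 1" and q="3*C2"]) (use y_def Kle True C2pos False assms in \<open>auto simp: algebra_simps\<close>)
    qed
    have "\<not> (\<exists>i\<le>2. has_gen a2 a3 (K - 1) y i)"
    proof
      assume "\<exists>i\<le>2. has_gen a2 a3 (K - 1) y i"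
      then obtain i where "i \<le> 2" "has_gen a2 a3 (K - 1) y i" by blast
      moreover have "i = 0 \<or> i = 1 \<or> i = 2" using \<open>i \<le> 2\<close> by auto
      ultimately show False using n0 n1 n2 by auto
    qed
    then show ?thesis using y0 ya by blast
  next
    case False
    have KK: "K = C2+a2-C1-2" unfolding K_def using False assms C2pos by auto
    define y where "y = (C2 - 1) * a2 + (a2 - C1 - 1)"
    have y0: "0 \<le> y" unfolding y_def using C2pos assms by simp
    have ya: "y < a3" unfolding y_def using assms by (simp add: algebra_simps)
    have n0: "\<not> has_gen a2 a3 (K - 1) y 0"
      by (subst gen_iff[OF assms(1), where r="a2 - C1 - 1" and q="C2 - 1"]) (use y_def KK C2pos assms in auto)
    have n1: "\<not> has_gen a2 a3 (K - 1) y 1"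
      by (subst gen_iff[OF assms(1), where r="a2 - 1" and q="2*C2 - 1"]) (use y_def KK C2pos assms in \<open>auto simp: algebra_simps\<close>)
    have n2: "\<not> has_gen a2 a3 (K - 1) y 2"
    proof (cases "C1 = 0")
      case True
      show ?thesis
        by (subst gen_iff[OF assms(1), where r="a2 - 1" and q="3*C2 - 1"]) (use y_def KK C2pos True assms in \<open>auto simp: algebra_simps\<close>)
    next
      case False
      show ?thesis
        by (subst gen_iff[OF assms(1), where r="C1 - 1" and q="3*C2"]) (use y_def KK C2pos False assms in \<open>auto simp: algebra_simps\<close>)
    qed
    have "\<not> (\<exists>i\<le>2. has_gen a2 a3 (K - 1) y i)"
    proof
      assume "\<exists>i\<le>2. has_gen a2 a3 (K - 1) y i"
      then obtain i where "i \<le> 2" "has_gen a2 a3 (K - 1) y i" by blast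
      moreover have "i = 0 \<or> i = 1 \<or> i = 2" using \<open>i \<le> 2\<close> by auto
      ultimately show False using n0 n1 n2 by auto
    qed
    then show ?thesis using y0 ya by blast
  qed
  then obtain y where y: "0 \<le> y" "y < a3" "\<not> (\<exists>i\<le>2. has_gen a2 a3 (K - 1) y i)" by blast
  have sg: "stride_generator a2 a3 n p" and nomax: "\<not> (\<exists>n' p'. n' > n \<and> stride_generator a2 a3 n' p')"
    using assms(8) unfolding fundamental_sg_def by auto
  from sg obtain x0 where x0: "0 \<le> x0" "x0 < a3" "\<not> (\<exists>i<p. has_gen a2 a3 n x0 i)"
    unfolding stride_generator_def by blast
  have p2: "1 < p" using np by auto
  have nK: "n < K"
  proof (rule ccontr)
    assume "\<not> n < K"
    then have "K \<le> n" by simp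
    from cover[OF x0(1,2)] obtain i where "i < p" "has_gen a2 a3 K x0 i" using p2 by auto
    then show False using mono_gen[OF _ \<open>K \<le> n\<close>] x0(3) by blast
  qed
  show False
  proof (cases "\<forall>x. 0 \<le> x \<and> x < a3 \<longrightarrow> has_gen a2 a3 K x 0")
    case True
    have "stride_generator a2 a3 K 0"
      unfolding stride_generator_def
    proof (intro conjI)
      show "\<forall>x. 0 \<le> x \<and> x < a3 \<longrightarrow> (\<exists>i\<le>0. has_gen a2 a3 K x i)" using True by auto
      show "\<exists>x\<ge>0. x < a3 \<and> \<not> (\<exists>i<0. has_gen a2 a3 K x i)" using assms by (intro exI[of _ 0]) auto
      show "\<exists>y\<ge>0. y < a3 \<and> \<not> (\<exists>i\<le>0 + 1. has_gen a2 a3 (K - 1) y i)" using y by (intro exI[of _ y]) auto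
    qed
    then show False using nomax nK by blast
  next
    case False
    then obtain x1 where x1: "0 \<le> x1" "x1 < a3" "\<not> has_gen a2 a3 K x1 0" by blast
    have "stride_generator a2 a3 K 1"
      unfolding stride_generator_def
    proof (intro conjI)
      show "\<forall>x. 0 \<le> x \<and> x < a3 \<longrightarrow> (\<exists>i\<le>1. has_gen a2 a3 K x i)" using cover by fastforce
      show "\<exists>x\<ge>0. x < a3 \<and> \<not> (\<exists>i<1. has_gen a2 a3 K x i)" using x1 by (intro exI[of _ x1]) auto
      show "\<exists>y\<ge>0. y < a3 \<and> \<not> (\<exists>i\<le>1 + 1. has_gen a2 a3 (K - 1) y i)" using y by (intro exI[of _ y]) auto
    qed
    then show False using nomax nK by blast
  qed
qed

end
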